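(* Let $1\leq e_1\leq\cdots\leq e_m$ be integers, let $b_i$ be integers with $0\leq b_i\leq e_i-1$ for $i=1,\ldots,m$, and let $b_0\geq1$ be an integer. Then for every $k=0,\ldots,m-1$, $$\prod_{i=1}^m(e_i-b_i)\geq\Big(\sum_{i=1}^{k+1}(e_i-b_i)-(k-1)-b_0-\sum_{i=k+2}^m b_i\Big)e_{k+2}\cdots e_m,$$ where for $k=m-1$ the product $e_{k+2}\cdots e_m$ is $1$ and the sum $\sum_{i=k+2}^m b_i$ is $0$. *)

theory Defs
  imports Main
begin

end

theory Submission
  imports Defs
begin
definition br :: "int list \<Rightarrow> (int\<times>int) list \<Rightarrow> int" where
  "br bs ts = 1 + sum_list (map (\<lambda>a. a - 1) bs) + sum_list (map (\<lambda>p. fst p - snd p) ts)"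

lemma br_Cons1[simp]: "br (a#bs) ts = br bs ts + (a - 1)" by (simp add: br_def)
lemma br_Cons2[simp]: "br bs ((x,y)#ts) = br bs ts + x - y" by (simp add: br_def)
lemma br_Nil_le: "\<forall>p\<in>set ts. fst p \<le> snd p \<Longrightarrow> br [] ts \<le> 1"
  unfolding br_def by (induction ts) auto
lemma br_ge: "\<forall>a\<in>set bs. 1 \<le> a \<Longrightarrow> br bs [] \<ge> 1"
  unfolding br_def by (induction bs) auto

lemma pl_nonneg: "\<forall>a\<in>set xs. (1::int) \<le> a \<Longrightarrow> 0 \<le> prod_list xs"
  by (rule prod_list_nonneg) auto

lemma gP:
  fixes a x y W :: int
  assumes "1 \<le> W" "W \<le> y" "1 \<le> a" "a \<le> y" "1 \<le> x" "x \<le> y"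
  shows "(W + a - 1 + x - y) * y \<le> a * x * W"
proof (cases "y = 1")
  case True then show ?thesis using assms by auto
next
  case False
  have id: "(y - 1) * (a * x * W - (W + a - 1 + x - y) * y) = (y - x)*((a-y)*(W-y)) + (x - 1)*(y*((a-1)*(W-1)))"
    by (simp add: algebra_simps)
  have "0 \<le> (a-y)*(W-y)" using assms by (simp add: mult_nonpos_nonpos)
  moreover have "0 \<le> y*((a-1)*(W-1))" using assms by simp
  ultimately have "0 \<le> (y - x)*((a-y)*(W-y)) + (x - 1)*(y*((a-1)*(W-1)))"
    using assms by simp
  then have "0 \<le> (y - 1) * (a * x * W - (W + a - 1 + x - y) * y)" using id by simp
  moreover have "y - 1 > 0" using False assms by simp
  ultimately show ?thesis by (simp add: zero_le_mult_iff)
qed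

lemma key:
  fixes bs :: "int list" and ts :: "(int \<times> int) list" and f :: int
  assumes "\<forall>a\<in>set bs. 1 \<le> a \<and> a \<le> f" "\<forall>p\<in>set ts. 1 \<le> fst p \<and> fst p \<le> snd p \<and> f \<le> snd p"
  shows "br bs ts * prod_list (map snd ts) \<le> prod_list bs * prod_list (map fst ts)"
  using assms
proof (induction "length bs + length ts" arbitrary: bs ts rule: less_induct)
  case less
  note hb = less.prems(1) and ht = less.prems(2)
  have Ynn: "\<And>ts'. set ts' \<subseteq> set ts \<Longrightarrow> 0 \<le> prod_list (map snd ts')"
    using ht by (intro pl_nonneg) force
  have Xnn: "\<And>ts'. set ts' \<subseteq> set ts \<Longrightarrow> 0 \<le> prod_list (map fst ts')"
    using ht by (intro pl_nonneg) force
  have Pnn: "\<And>bs'. set bs' \<subseteq> set bs \<Longrightarrow> 0 \<le> prod_list bs'"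
    using hb by (intro pl_nonneg) force
  show ?case
  proof (cases "\<exists>a bs'. bs = a#bs' \<and> br bs' ts \<ge> 1")
    case True
    then obtain a bs' where A: "bs = a#bs'" "br bs' ts \<ge> 1" by blast
    define V where "V = br bs' ts"
    define Y where "Y = prod_list (map snd ts)"
    define R where "R = prod_list bs' * prod_list (map fst ts)"
    have IH: "V * Y \<le> R" unfolding V_def Y_def R_def
      using less.hyps[of bs' ts] hb ht A by auto
    have a1: "1 \<le> a" using hb A by auto
    have Y0: "0 \<le> Y" unfolding Y_def using Ynn by auto
    have "(V + a - 1) * Y \<le> a * V * Y"
    proof -
      have "0 \<le> (a - 1) * (V - 1) * Y" using a1 A Y0 V_def by simp
      then show ?thesis by (simp add: algebra_simps)
    qed
    also have "\<dots> \<le> a * R" using IH a1 by (simp add: mult.assoc)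
    finally show ?thesis using A unfolding V_def Y_def R_def by (simp add: algebra_simps)
  next
    case notA: False
    show ?thesis
    proof (cases ts)
      case Nil
      then have "bs = []"
        using notA br_ge[of "tl bs"] hb by (cases bs) auto
      then show ?thesis using Nil by (simp add: br_def)
    next
      case (Cons p ts')
      obtain x y where p: "p = (x,y)" by force
      have xy: "1 \<le> x" "x \<le> y" "f \<le> y" using ht Cons p by auto
      define Y' where "Y' = prod_list (map snd ts')"
      define X' where "X' = prod_list (map fst ts')"
      have Y0: "0 \<le> Y'" unfolding Y'_def using Ynn Cons by auto
      have X0: "0 \<le> X'" unfolding X'_def using Xnn Cons by auto
      show ?thesis
      proof (cases "br bs ts' \<le> y")
        case True
        define WT where "WT = br bs ts'"
        have IH: "WT * Y' \<le> prod_list bs * X'" unfolding WT_def Y'_def X'_def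
          using less.hyps[of bs ts'] hb ht Cons by auto
        have P0: "0 \<le> prod_list bs" using Pnn by auto
        have goal: "(WT + x - y) * (y * Y') \<le> prod_list bs * (x * X')"
        proof (cases "WT \<ge> 0")
          case True
          have "0 \<le> (y - x) * (y - WT)" using xy \<open>br bs ts' \<le> y\<close> WT_def by simp
          then have "(WT + x - y) * y \<le> x * WT" by (simp add: algebra_simps)
          then have "(WT + x - y) * y * Y' \<le> x * WT * Y'" using Y0 by (rule mult_right_mono)
          also have "\<dots> \<le> x * (prod_list bs * X')" using IH xy by (simp add: mult.assoc)
          finally show ?thesis by (simp add: algebra_simps)
        next
          case False
          then have "(WT + x - y) * (y * Y') \<le> 0" using xy Y0
            by (intro mult_nonpos_nonneg) auto
          also have "0 \<le> prod_list bs * (x * X')" using P0 xy X0 by simp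
          finally show ?thesis .
        qed
        then show ?thesis using Cons p WT_def Y'_def X'_def by (simp add: algebra_simps)
      next
        case False
        then obtain a bs' where bsc: "bs = a#bs'"
          using br_Nil_le[of ts'] ht Cons xy by (cases bs) auto
        define W where "W = br bs' ts'"
        have a: "1 \<le> a" "a \<le> f" using hb bsc by auto
        have W1: "W + a - 1 > y" using False bsc W_def by simp
        have W2: "W + x - y < 1" using notA bsc Cons p W_def by auto
        have IH: "W * Y' \<le> prod_list bs' * X'" unfolding W_def Y'_def X'_def
          using less.hyps[of bs' ts'] hb ht Cons bsc by auto
        have g: "(W + a - 1 + x - y) * y \<le> a * x * W"
          by (rule gP) (use W1 W2 a xy in auto)
        have "(W + a - 1 + x - y) * y * Y' \<le> a * x * W * Y'" using g Y0 by (rule mult_right_mono)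
        also have "\<dots> \<le> a * x * (prod_list bs' * X')"
          using IH a xy by (simp add: mult.assoc)
        finally show ?thesis using bsc Cons p W_def Y'_def X'_def by (simp add: algebra_simps)
      qed
    qed
  qed
qed

lemma prod_upt_conv: "prod_list (map g [a..<c]) = prod g {a..<c}"
  by (metis distinct_upt prod.distinct_set_conv_list set_upt)
lemma sum_upt_conv: "sum_list (map g [a..<c]) = sum g {a..<c}"
  by (metis distinct_upt sum.distinct_set_conv_list set_upt)

theorem proposition5p6:
  fixes m k :: nat and e b :: "nat \<Rightarrow> int" and b0 :: int
  assumes e_pos: "\<forall>i\<in>{1..m}. 1 \<le> e i"
    and e_mono: "\<forall>i j. 1 \<le> i \<and> i \<le> j \<and> j \<le> m \<longrightarrow> e i \<le> e j"
    and b_bounds: "\<forall>i\<in>{1..m}. 0 \<le> b i \<and> b i \<le> e i - 1"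
    and b0_pos: "b0 \<ge> 1"
    and k_range: "k \<le> m - 1" and m_pos: "m \<ge> 1"
  shows "(\<Prod>i=1..m. e i - b i) \<ge>
    ((\<Sum>i=1..k+1. e i - b i) - (int k - 1) - b0 - (\<Sum>i=k+2..m. b i))
      * (\<Prod>i=k+2..m. e i)"
proof -
  define bs where "bs = map (\<lambda>i. e i - b i) [1..<k+2]"
  define ts where "ts = map (\<lambda>j. (e j - b j, e j)) [k+2..<m+1]"
  have hb: "\<forall>a\<in>set bs. 1 \<le> a \<and> a \<le> e (k+1)"
  proof
    fix a assume "a \<in> set bs"
    then obtain i where i: "1 \<le> i" "i \<le> k+1" "a = e i - b i" unfolding bs_def by auto
    have "i \<le> m" using i k_range m_pos by simp
    then have "0 \<le> b i" "b i \<le> e i - 1" using b_bounds i by auto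
    moreover have "e i \<le> e (k+1)" using e_mono i k_range m_pos by simp
    ultimately show "1 \<le> a \<and> a \<le> e (k+1)" using i by simp
  qed
  have ht: "\<forall>p\<in>set ts. 1 \<le> fst p \<and> fst p \<le> snd p \<and> e (k+1) \<le> snd p"
  proof
    fix p assume "p \<in> set ts"
    then obtain i where i: "k+2 \<le> i" "i \<le> m" "p = (e i - b i, e i)" unfolding ts_def by auto
    then have "0 \<le> b i" "b i \<le> e i - 1" using b_bounds i by auto
    moreover have "e (k+1) \<le> e i" using e_mono i by simp
    ultimately show "1 \<le> fst p \<and> fst p \<le> snd p \<and> e (k+1) \<le> snd p" using i by simp
  qed
  note K = key[OF hb ht]
  have i1: "{1..k+1} = {1..<k+2}" "{k+2..m} = {k+2..<m+1}" "{1..m} = {1..<m+1}" by auto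
  have s1: "sum_list (map (\<lambda>a. a - 1) bs) = (\<Sum>i=1..k+1. e i - b i) - int k - 1"
    unfolding bs_def i1 by (simp add: sum_upt_conv comp_def sum_subtractf)
  have s2: "sum_list (map (\<lambda>p. fst p - snd p) ts) = - (\<Sum>i=k+2..m. b i)"
    unfolding ts_def i1 by (simp add: sum_upt_conv comp_def sum_negf)
  have brv: "br bs ts = (\<Sum>i=1..k+1. e i - b i) - int k - (\<Sum>i=k+2..m. b i)"
    unfolding br_def s1 s2 by simp
  have p1: "prod_list (map snd ts) = (\<Prod>i=k+2..m. e i)"
    unfolding ts_def i1 by (simp add: prod_upt_conv comp_def)
  have p2: "prod_list bs * prod_list (map fst ts) = (\<Prod>i=1..m. e i - b i)"
  proof -
    have "prod_list bs * prod_list (map fst ts) = prod (\<lambda>i. e i - b i) {1..<k+2} * prod (\<lambda>i. e i - b i) {k+2..<m+1}"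
      unfolding bs_def ts_def by (simp add: prod_upt_conv comp_def)
    also have "\<dots> = prod (\<lambda>i. e i - b i) {1..<m+1}"
      by (rule prod.atLeastLessThan_concat) (use k_range m_pos in auto)
    finally show ?thesis using i1 by simp
  qed
  have E0: "0 \<le> (\<Prod>i=k+2..m. e i)"
  proof (intro prod_nonneg)
    fix i assume "i \<in> {k+2..m}"
    then have "1 \<le> e i" using e_pos by auto
    then show "0 \<le> e i" by simp
  qed
  have "((\<Sum>i=1..k+1. e i - b i) - (int k - 1) - b0 - (\<Sum>i=k+2..m. b i)) * (\<Prod>i=k+2..m. e i)
        \<le> br bs ts * (\<Prod>i=k+2..m. e i)"
    using E0 b0_pos unfolding brv by (intro mult_right_mono) auto
  also have "\<dots> \<le> (\<Prod>i=1..m. e i - b i)" using K p1 p2 by simp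
  finally show ?thesis .
qed
end
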